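(* Let $(\Theta,d)$ be a connected locally compact metric space and $(X,\mathcal{B},P)$ a probability space. Let $X_1,X_2,\dots$ be i.i.d. with law $P$ and $P_n:=n^{-1}\sum_{j=1}^n\delta_{X_j}$. Let $h:X\times\Theta\to\mathbb{R}$ be such that $h(\cdot,\theta)$ is measurable for each $\theta\in\Theta$. Assume: (i) $\theta\mapsto Ph(\theta):=\int h(x,\theta)\,dP(x)\in(-\infty,+\infty]$ is well defined and uniminimal on $\Theta$, with minimum at $\theta_0$; (ii) outside events $A_n$ with $\Pr(A_n)\to0$ as $n\to\infty$, the function $\theta\mapsto P_nh(\theta):=\int h(x,\theta)\,dP_n(x)$ is uniminimal on $\Theta$; (iii) for some neighborhood $U$ of $\theta_0$, $\{h(\cdot,\theta):\theta\in U\}$ is a Glivenko–Cantelli class for $P$. Then $\theta_0$ is a definite M-limit for $P$ with respect to $h$, i.e. for every neighborhood $U$ of $\theta_0$ there is $\varepsilon>0$ such that $$(P^n)^*\Big\{\inf\{P_nh(\theta):\theta\notin U\}\le\varepsilon+\inf\{P_nh(\phi):\phi\in U\}\Big\}\to0\quad(n\to\infty),$$ where $(P^n)^*$ denotes outer probability; and $\theta_0$ is the M-functional of $P$ for $h$, i.e. $Ph(\theta)$ is defined, satisfies $-\infty<Ph(\theta)\le+\infty$ for all $\theta$, and is minimized uniquely at $\theta=\theta_0$.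
   Context: A function $f:\Theta\to(-\infty,+\infty]$ is uniminimal iff it is lower semicontinuous, has a unique relative (local) minimum at some point, and for every $t\in\mathbb{R}$ the sublevel set $\{\theta: f(\theta)\le t\}$ is connected. A class $\mathcal{F}$ of $P$-integrable functions is a Glivenko–Cantelli class for $P$ if $\sup\{|\int f\,d(P_n-P)|: f\in\mathcal{F}\}\to0$ almost surely as $n\to\infty$ (the supremum being assumed measurable). *)

theory Defs
  imports "HOL-Probability.Probability"
begin

definition lsc_fun :: "('a::topological_space \<Rightarrow> ereal) \<Rightarrow> bool" where
  "lsc_fun f \<longleftrightarrow> (\<forall>t::ereal. closed {\<theta>. f \<theta> \<le> t})"

definition local_min_at :: "('a::topological_space \<Rightarrow> ereal) \<Rightarrow> 'a \<Rightarrow> bool" where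
  "local_min_at f x \<longleftrightarrow> (\<exists>V. open V \<and> x \<in> V \<and> (\<forall>y\<in>V. f x \<le> f y))"

definition uniminimal_at :: "('a::topological_space \<Rightarrow> ereal) \<Rightarrow> 'a \<Rightarrow> bool" where
  "uniminimal_at f x0 \<longleftrightarrow> lsc_fun f \<and> local_min_at f x0 \<and>
     (\<forall>y. local_min_at f y \<longrightarrow> y = x0) \<and>
     (\<forall>t::real. connected {\<theta>. f \<theta> \<le> ereal t})"

definition uniminimal :: "('a::topological_space \<Rightarrow> ereal) \<Rightarrow> bool" where
  "uniminimal f \<longleftrightarrow> (\<exists>x0. uniminimal_at f x0)"

definition nbhd :: "'a::topological_space set \<Rightarrow> 'a \<Rightarrow> bool" where
  "nbhd U x \<longleftrightarrow> (\<exists>V. open V \<and> x \<in> V \<and> V \<subseteq> U)"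

text \<open>Integral of a real function with values in (-infinity,+infinity]:
  well defined when the negative part has finite integral.\<close>
definition int_defined :: "'b measure \<Rightarrow> ('b \<Rightarrow> real) \<Rightarrow> bool" where
  "int_defined M f \<longleftrightarrow> (\<integral>\<^sup>+ x. ennreal (- f x) \<partial>M) < \<infinity>"

definition eint :: "'b measure \<Rightarrow> ('b \<Rightarrow> real) \<Rightarrow> ereal" where
  "eint M f = enn2ereal (\<integral>\<^sup>+ x. ennreal (f x) \<partial>M) - enn2ereal (\<integral>\<^sup>+ x. ennreal (- f x) \<partial>M)"

definition emp :: "nat \<Rightarrow> (nat \<Rightarrow> 'b) \<Rightarrow> ('b \<Rightarrow> real) \<Rightarrow> real" where
  "emp n x f = (\<Sum>j<n. f (x j)) / real n"

text \<open>Glivenko--Cantelli class for P, along the i.i.d. sequence given by the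
  coordinates of the infinite product space P^infinity; the suprema are assumed measurable.\<close>
definition glivenko_cantelli :: "'b measure \<Rightarrow> ('b \<Rightarrow> real) set \<Rightarrow> bool" where
  "glivenko_cantelli M F \<longleftrightarrow>
     (\<forall>f\<in>F. integrable M f) \<and>
     (\<forall>n. (\<lambda>\<omega>. SUP f\<in>F. ereal \<bar>emp n \<omega> f - integral\<^sup>L M f\<bar>)
            \<in> borel_measurable (PiM UNIV (\<lambda>_. M))) \<and>
     (AE \<omega> in PiM UNIV (\<lambda>_. M).
        (\<lambda>n. SUP f\<in>F. ereal \<bar>emp n \<omega> f - integral\<^sup>L M f\<bar>) \<longlonglongrightarrow> 0)"

definition outer_prob :: "'c measure \<Rightarrow> 'c set \<Rightarrow> real" where
  "outer_prob N A = Inf {measure N B | B. B \<in> sets N \<and> A \<subseteq> B}"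

end

theory Submission
  imports Defs
begin

lemma eint_integrable:
  assumes "integrable M g" shows "eint M g = ereal (integral\<^sup>L M g)"
proof -
  have a: "(\<integral>\<^sup>+ x. ennreal (g x) \<partial>M) \<noteq> \<infinity>" "(\<integral>\<^sup>+ x. ennreal (- g x) \<partial>M) \<noteq> \<infinity>"
    using assms by auto
  have b: "enn2ereal A = ereal (enn2real A)" if "A \<noteq> \<infinity>" for A :: ennreal
    using that by (cases A rule: ennreal_cases) auto
  show ?thesis unfolding eint_def real_lebesgue_integral_def[OF assms]
    using a b[OF a(1)] b[OF a(2)] by simp
qed

lemma eint_gt_minf:
  assumes "int_defined M g" shows "eint M g > - \<infinity>"
  using assms unfolding int_defined_def eint_def
  by (simp add: ereal_diff_eq_MInfty_iff less_ennreal.rep_eq)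

lemma conv_in_prob:
  fixes g :: "nat \<Rightarrow> 'c \<Rightarrow> ereal"
  assumes N: "prob_space N" and gm: "\<And>n. g n \<in> borel_measurable N"
    and ae: "AE \<omega> in N. (\<lambda>n. g n \<omega>) \<longlonglongrightarrow> 0" and eta: "\<eta> > 0"
  shows "(\<lambda>n. measure N {\<omega>\<in>space N. ereal \<eta> \<le> g n \<omega>}) \<longlonglongrightarrow> 0"
proof -
  interpret prob_space N by (rule N)
  define S where "S n = {\<omega>\<in>space N. ereal \<eta> \<le> g n \<omega>}" for n
  have Sm: "S n \<in> sets N" for n unfolding S_def using gm[of n] by measurable
  have "(\<lambda>n. integral\<^sup>L N (indicator (S n) :: 'c \<Rightarrow> real)) \<longlonglongrightarrow> integral\<^sup>L N (\<lambda>_. 0::real)"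
  proof (rule integral_dominated_convergence[where w="\<lambda>_. 1"])
    show "AE x in N. (\<lambda>i. indicator (S i) x :: real) \<longlonglongrightarrow> 0"
      using ae
    proof eventually_elim
      case (elim x)
      have "eventually (\<lambda>n. g n x < ereal \<eta>) sequentially"
        using order_tendstoD(2)[OF elim] eta by simp
      then have "eventually (\<lambda>n. indicator (S n) x = (0::real)) sequentially"
        by eventually_elim (auto simp: S_def split: split_indicator)
      then show ?case by (rule tendsto_eventually)
    qed
  qed (use Sm in auto)
  then show ?thesis using Sm by (simp add: S_def[symmetric])
qed

lemma uni_strict:
  fixes f :: "'a::metric_space \<Rightarrow> ereal"
  assumes conn: "connected (UNIV :: 'a set)" and u: "uniminimal_at f x0"
  shows "\<And>\<theta>. \<theta> \<noteq> x0 \<Longrightarrow> f x0 < f \<theta>"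
proof (rule ccontr)
  fix \<theta> assume ne: "\<theta> \<noteq> x0" and nl: "\<not> f x0 < f \<theta>"
  then have le: "f \<theta> \<le> f x0" by simp
  from u obtain V where V: "open V" "x0 \<in> V" "\<And>y. y \<in> V \<Longrightarrow> f x0 \<le> f y"
    unfolding uniminimal_at_def local_min_at_def by blast
  have uniq: "\<And>y. local_min_at f y \<Longrightarrow> y = x0" using u unfolding uniminimal_at_def by blast
  define L where "L = {y. f y \<le> f x0}"
  have cL: "connected L"
  proof (cases "f x0")
    case (real r)
    then show ?thesis using u unfolding uniminimal_at_def L_def by simp
  next
    case PInf
    then have "L = UNIV" unfolding L_def by auto
    then show ?thesis using conn by simp
  next
    case MInf
    then have "L = {y. f y = - \<infinity>}" unfolding L_def by auto
    have "local_min_at f \<theta>" unfolding local_min_at_def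
      using le MInf by (intro exI[of _ UNIV]) auto
    then show ?thesis using uniq ne by blast
  qed
  have "\<exists>y\<in>L \<inter> V. y \<noteq> x0"
  proof (rule ccontr)
    assume "\<not> ?thesis"
    then have LV: "L \<inter> V \<subseteq> {x0}" by blast
    have "open (- {x0})" by (simp add: open_Compl)
    moreover have "x0 \<in> L" "\<theta> \<in> L" using le by (auto simp: L_def)
    ultimately have "open V \<and> open (-{x0}) \<and> L \<subseteq> V \<union> -{x0} \<and> V \<inter> -{x0} \<inter> L = {} \<and> V \<inter> L \<noteq> {} \<and> -{x0} \<inter> L \<noteq> {}"
      using V(1,2) LV ne by blast
    then show False using cL unfolding connected_def by blast
  qed
  then obtain y where y: "y \<in> L" "y \<in> V" "y \<noteq> x0" by blast
  have "local_min_at f y" unfolding local_min_at_def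
  proof (intro exI[of _ V] conjI ballI)
    fix z assume "z \<in> V"
    then show "f y \<le> f z" using y V(3) by (auto simp: L_def intro: order_trans)
  qed (use V y in auto)
  then show False using uniq y by blast
qed

lemma lsc_gap:
  fixes f :: "'a::metric_space \<Rightarrow> ereal"
  assumes S: "compact S" and l: "lsc_fun f" and gt: "\<And>y. y \<in> S \<Longrightarrow> ereal c < f y"
  shows "\<exists>\<eta>>0. \<forall>y\<in>S. ereal (c + \<eta>) \<le> f y"
proof -
  define Ok where "Ok k = - {y. f y \<le> ereal (c + 1 / real (Suc k))}" for k :: nat
  have oO: "open (Ok k)" for k using l unfolding lsc_fun_def Ok_def by (simp add: open_Compl)
  have cov: "S \<subseteq> \<Union> (Ok ` UNIV)"
  proof
    fix y assume "y \<in> S"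
    then have g: "ereal c < f y" by (rule gt)
    show "y \<in> \<Union> (Ok ` UNIV)"
    proof (cases "f y")
      case (real r)
      with g have "0 < r - c" by simp
      from reals_Archimedean[OF this] obtain k where k: "inverse (real (Suc k)) < r - c" ..
      have "c + 1 / real (Suc k) < r" using k by (simp add: inverse_eq_divide)
      then have "y \<in> Ok k" using real by (simp add: Ok_def not_le)
      then show ?thesis by blast
    next
      case PInf then have "y \<in> Ok 0" by (simp add: Ok_def)
      then show ?thesis by blast
    next
      case MInf then show ?thesis using g by simp
    qed
  qed
  obtain I where I: "finite I" "S \<subseteq> \<Union> (Ok ` I)"
  proof (rule compactE_image[OF S, of UNIV Ok])
    show "\<And>T. T \<in> UNIV \<Longrightarrow> open (Ok T)" by (rule oO)
    show "S \<subseteq> \<Union> (Ok ` UNIV)" by (rule cov)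
  qed
  define K where "K = Max (insert 0 I)"
  have mono: "Ok k \<subseteq> Ok K" if "k \<in> I" for k
  proof
    fix y assume y: "y \<in> Ok k"
    have "k \<le> K" using that I(1) by (simp add: K_def)
    then have "real (Suc k) \<le> real (Suc K)" by simp
    then have "1 / real (Suc K) \<le> 1 / real (Suc k)"
      by (intro divide_left_mono) auto
    then have e: "ereal (c + 1 / real (Suc K)) \<le> ereal (c + 1 / real (Suc k))" by simp
    have "\<not> f y \<le> ereal (c + 1 / real (Suc k))" using y by (simp add: Ok_def)
    then have "\<not> f y \<le> ereal (c + 1 / real (Suc K))" using e order_trans by blast
    then show "y \<in> Ok K" by (simp add: Ok_def)
  qed
  have "\<forall>y\<in>S. ereal (c + 1 / real (Suc K)) \<le> f y"
  proof
    fix y assume "y \<in> S"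
    then obtain k where "k \<in> I" "y \<in> Ok k" using I by blast
    then have "y \<in> Ok K" using mono by blast
    then show "ereal (c + 1 / real (Suc K)) \<le> f y" unfolding Ok_def by simp
  qed
  then show ?thesis by (intro exI[of _ "1 / real (Suc K)"]) auto
qed

theorem theorem2:
  fixes M :: "'b measure" and h :: "'b \<Rightarrow> 'a::metric_space \<Rightarrow> real" and \<theta>0 :: 'a
  assumes conn: "connected (UNIV :: 'a set)"
    and lc: "locally_compact_space (euclidean :: 'a topology)"
    and P: "prob_space M"
    and meas: "\<And>\<theta>. (\<lambda>x. h x \<theta>) \<in> borel_measurable M"
    and i_def: "\<And>\<theta>. int_defined M (\<lambda>x. h x \<theta>)"
    and i_uni: "uniminimal_at (\<lambda>\<theta>. eint M (\<lambda>x. h x \<theta>)) \<theta>0"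
    and ii: "\<exists>A. (\<forall>n. A n \<in> sets (PiM {..<n} (\<lambda>_. M))) \<and>
               (\<lambda>n. measure (PiM {..<n} (\<lambda>_. M)) (A n)) \<longlonglongrightarrow> 0 \<and>
               (\<forall>n x. x \<in> space (PiM {..<n} (\<lambda>_. M)) - A n \<longrightarrow>
                      uniminimal (\<lambda>\<theta>. ereal (emp n x (\<lambda>y. h y \<theta>))))"
    and iii: "\<exists>U. nbhd U \<theta>0 \<and> glivenko_cantelli M ((\<lambda>\<theta>. (\<lambda>x. h x \<theta>)) ` U)"
  shows "(\<forall>U. nbhd U \<theta>0 \<longrightarrow> (\<exists>\<epsilon>>0.
            (\<lambda>n. outer_prob (PiM {..<n} (\<lambda>_. M))
               {x \<in> space (PiM {..<n} (\<lambda>_. M)).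
                  (INF \<theta>\<in>- U. ereal (emp n x (\<lambda>y. h y \<theta>)))
                    \<le> ereal \<epsilon> + (INF \<phi>\<in>U. ereal (emp n x (\<lambda>y. h y \<phi>)))}) \<longlonglongrightarrow> 0))
       \<and> (\<forall>\<theta>. int_defined M (\<lambda>x. h x \<theta>) \<and> eint M (\<lambda>x. h x \<theta>) > - \<infinity>)
       \<and> (\<forall>\<theta>. \<theta> \<noteq> \<theta>0 \<longrightarrow> eint M (\<lambda>x. h x \<theta>0) < eint M (\<lambda>x. h x \<theta>))"
  proof -
  define f where "f \<theta> = eint M (\<lambda>x. h x \<theta>)" for \<theta>
  define I where "I \<theta> = integral\<^sup>L M (\<lambda>x. h x \<theta>)" for \<theta>
  define Q where "Q n = PiM {..<n} (\<lambda>_. M)" for n :: nat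
  define Pinf where "Pinf = PiM (UNIV::nat set) (\<lambda>_. M)"
  interpret PM: prob_space M by (rule P)
  interpret PP: product_prob_space "\<lambda>_::nat. M" "UNIV :: nat set"
    by unfold_locales
  have Qprob: "prob_space (Q n)" for n unfolding Q_def by (rule prob_space_PiM) (rule P)
  have PinfP: "prob_space Pinf" unfolding Pinf_def by (rule prob_space_PiM) (rule P)
  obtain A where Am: "\<And>n. A n \<in> sets (Q n)"
    and Alim: "(\<lambda>n. measure (Q n) (A n)) \<longlonglongrightarrow> 0"
    and Auni: "\<And>n x. x \<in> space (Q n) - A n \<Longrightarrow> uniminimal (\<lambda>\<theta>. ereal (emp n x (\<lambda>y. h y \<theta>)))"
    using ii unfolding Q_def by blast
  have part2: "\<forall>\<theta>. int_defined M (\<lambda>x. h x \<theta>) \<and> eint M (\<lambda>x. h x \<theta>) > - \<infinity>"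
    using i_def eint_gt_minf by blast
  have strict: "\<And>\<theta>. \<theta> \<noteq> \<theta>0 \<Longrightarrow> f \<theta>0 < f \<theta>"
    using uni_strict[OF conn i_uni] unfolding f_def by blast
  have part1: "\<forall>U. nbhd U \<theta>0 \<longrightarrow> (\<exists>\<epsilon>>0.
            (\<lambda>n. outer_prob (PiM {..<n} (\<lambda>_. M))
               {x \<in> space (PiM {..<n} (\<lambda>_. M)).
                  (INF \<theta>\<in>- U. ereal (emp n x (\<lambda>y. h y \<theta>)))
                    \<le> ereal \<epsilon> + (INF \<phi>\<in>U. ereal (emp n x (\<lambda>y. h y \<phi>)))}) \<longlonglongrightarrow> 0)"
  proof (intro allI impI)
    fix U assume "nbhd U \<theta>0"
    then obtain V where V: "open V" "\<theta>0 \<in> V" "V \<subseteq> U" unfolding nbhd_def by blast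
    obtain U0 where U0: "nbhd U0 \<theta>0" and gc: "glivenko_cantelli M ((\<lambda>\<theta>. (\<lambda>x. h x \<theta>)) ` U0)"
      using iii by blast
    obtain V0 where V0: "open V0" "\<theta>0 \<in> V0" "V0 \<subseteq> U0" using U0 unfolding nbhd_def by blast
    have "\<exists>Ob K. open Ob \<and> compact K \<and> \<theta>0 \<in> Ob \<and> Ob \<subseteq> K"
      using lc unfolding locally_compact_space_def by auto
    then obtain Ob K where OK: "open Ob" "compact K" "\<theta>0 \<in> Ob" "Ob \<subseteq> K" by blast
    have "open (V \<inter> V0 \<inter> Ob)" "\<theta>0 \<in> V \<inter> V0 \<inter> Ob" using V V0 OK by auto
    then obtain r where r: "r > 0" "ball \<theta>0 r \<subseteq> V \<inter> V0 \<inter> Ob" by (meson open_contains_ball)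
    define W where "W = ball \<theta>0 (r/2)"
    have oW: "open W" and W0: "\<theta>0 \<in> W" using r by (auto simp: W_def)
    have clW: "closure W \<subseteq> ball \<theta>0 r"
    proof -
      have "closure W \<subseteq> cball \<theta>0 (r/2)" unfolding W_def by (rule closure_minimal) auto
      also have "\<dots> \<subseteq> ball \<theta>0 r" using r by (auto simp: subset_eq)
      finally show ?thesis .
    qed
    have frW: "frontier W \<subseteq> U0" "frontier W \<subseteq> K"
      using clW r OK V0 by (auto simp: frontier_def)
    have cfr: "compact (frontier W)"
    proof -
      have "frontier W = K \<inter> frontier W" using frW by blast
      then show ?thesis using compact_Int_closed[OF OK(2), of "frontier W"] by simp
    qed
    have "W \<subseteq> ball \<theta>0 r" using r by (auto simp: W_def)
    then have WU: "W \<subseteq> U" using r V by blast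
    have gc1: "\<forall>q\<in>(\<lambda>\<theta>. (\<lambda>x. h x \<theta>)) ` U0. integrable M q"
      using gc unfolding glivenko_cantelli_def by (rule conjunct1)
    have integ: "\<And>\<theta>. \<theta> \<in> U0 \<Longrightarrow> integrable M (\<lambda>x. h x \<theta>)"
      using gc1 by blast
    have fI: "\<And>\<theta>. \<theta> \<in> U0 \<Longrightarrow> f \<theta> = ereal (I \<theta>)"
      using eint_integrable integ unfolding f_def I_def by blast
    have th0U0: "\<theta>0 \<in> U0" using V0 by blast
    have lscf: "lsc_fun f" using i_uni unfolding uniminimal_at_def f_def by simp
    have gt: "ereal (I \<theta>0) < f y" if "y \<in> frontier W" for y
    proof -
      have "y \<notin> W" using that oW by (simp add: frontier_def interior_open)
      then have "y \<noteq> \<theta>0" using W0 by blast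
      then show ?thesis using strict[OF \<open>y \<noteq> \<theta>0\<close>] fI[OF th0U0] by simp
    qed
    obtain \<eta>0 where eta0: "\<eta>0 > 0" "\<forall>y\<in>frontier W. ereal (I \<theta>0 + \<eta>0) \<le> f y"
      using lsc_gap[OF cfr lscf gt] by blast
    define \<eta> where "\<eta> = \<eta>0 / 3"
    have eta: "\<eta> > 0" using eta0 by (simp add: \<eta>_def)
    have fr_bound: "I \<theta>0 + 3*\<eta> \<le> I y" if "y \<in> frontier W" for y
    proof -
      have yU: "y \<in> U0" using frW that by blast
      have "ereal (I \<theta>0 + \<eta>0) \<le> f y" using eta0(2) that by blast
      then have "ereal (I \<theta>0 + \<eta>0) \<le> ereal (I y)" using fI[OF yU] by simp
      then show ?thesis by (simp add: \<eta>_def)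
    qed
    have D: "\<not> ((INF \<theta>\<in>- U. ereal (emp n x (\<lambda>y. h y \<theta>))) \<le> ereal \<eta> + (INF \<phi>\<in>U. ereal (emp n x (\<lambda>y. h y \<phi>))))"
      if x: "x \<in> space (Q n)" "x \<notin> A n" and b: "\<forall>\<theta>\<in>U0. \<bar>emp n x (\<lambda>y. h y \<theta>) - I \<theta>\<bar> < \<eta>" for n x
    proof -
      define p where "p \<theta> = emp n x (\<lambda>y. h y \<theta>)" for \<theta>
      have "uniminimal (\<lambda>\<theta>. ereal (p \<theta>))" unfolding p_def using x by (intro Auni) simp
      then have cp: "\<And>t. connected {\<theta>. p \<theta> \<le> t}" unfolding uniminimal_def uniminimal_at_def by auto
      have p0: "p \<theta>0 < I \<theta>0 + \<eta>" using b th0U0 by (auto simp: p_def abs_less_iff)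
      have far: "I \<theta>0 + 2*\<eta> \<le> p \<theta>" if th: "\<theta> \<notin> U" for \<theta>
      proof (rule ccontr)
        assume nf: "\<not> ?thesis"
        define t where "t = max (p \<theta>) (p \<theta>0)"
        have tlt: "t < I \<theta>0 + 2*\<eta>" using p0 eta nf by (auto simp: t_def)
        have "\<theta>0 \<in> {\<theta>. p \<theta> \<le> t} \<inter> W" using W0 by (simp add: t_def)
        then have "{\<theta>. p \<theta> \<le> t} \<inter> W \<noteq> {}" by blast
        moreover have "\<theta> \<in> {\<theta>. p \<theta> \<le> t} - W" using WU th by (auto simp: t_def)
        then have "{\<theta>. p \<theta> \<le> t} - W \<noteq> {}" by blast
        ultimately obtain y where y: "p y \<le> t" "y \<in> frontier W"
        proof -
          have "{\<theta>. p \<theta> \<le> t} \<inter> frontier W \<noteq> {}"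
            by (rule connected_Int_frontier[OF cp]) fact+
          then show ?thesis using that by blast
        qed
        have yU: "y \<in> U0" using frW y(2) by blast
        have "\<bar>p y - I y\<bar> < \<eta>" using bspec[OF b yU] by (simp add: p_def)
        then show False using fr_bound[OF y(2)] y(1) tlt by (auto simp: abs_less_iff)
      qed
      have a1: "ereal (I \<theta>0 + 2*\<eta>) \<le> (INF \<theta>\<in>- U. ereal (p \<theta>))"
        by (rule INF_greatest) (use far in auto)
      have "(INF \<phi>\<in>U. ereal (p \<phi>)) \<le> ereal (p \<theta>0)" by (rule INF_lower) (use V in auto)
      then have a2: "ereal \<eta> + (INF \<phi>\<in>U. ereal (p \<phi>)) \<le> ereal (\<eta> + p \<theta>0)"
      proof -
        have "ereal \<eta> + (INF \<phi>\<in>U. ereal (p \<phi>)) \<le> ereal \<eta> + ereal (p \<theta>0)"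
          by (rule add_left_mono) fact
        then show ?thesis by simp
      qed
      have a3: "ereal (\<eta> + p \<theta>0) < ereal (I \<theta>0 + 2*\<eta>)" using p0 by simp
      show ?thesis using a1 a2 a3 proof -
        have lt: "ereal \<eta> + (INF \<phi>\<in>U. ereal (p \<phi>)) < (INF \<theta>\<in>- U. ereal (p \<theta>))"
          by (rule order_le_less_trans[OF a2 order_less_le_trans[OF a3 a1]])
        show ?thesis using lt[unfolded p_def] by (simp add: not_le)
      qed
    qed
    obtain c where c: "c \<in> space M" using PM.not_empty by blast
    define ext where "ext n x = (\<lambda>i::nat. if i < n then x i else c)" for n and x :: "nat \<Rightarrow> 'b"
    define F where "F = (\<lambda>\<theta>. (\<lambda>x. h x \<theta>)) ` U0"
    define g where "g = (\<lambda>n \<omega>. (SUP q\<in>F. ereal \<bar>emp n \<omega> q - integral\<^sup>L M q\<bar>))"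
    have gc23: "(\<forall>n. g n \<in> borel_measurable Pinf) \<and> (AE \<omega> in Pinf. (\<lambda>n. g n \<omega>) \<longlonglongrightarrow> 0)"
      using gc unfolding glivenko_cantelli_def F_def[symmetric] g_def Pinf_def by (rule conjunct2)
    have gm: "\<And>n. g n \<in> borel_measurable Pinf" using gc23 by blast
    have gae: "AE \<omega> in Pinf. (\<lambda>n. g n \<omega>) \<longlonglongrightarrow> 0" using gc23 by blast
    have emp_ext: "emp n (ext n x) q = emp n x q" for n x q
      unfolding emp_def ext_def by (auto intro!: sum.cong)
    have emp_res: "emp n (restrict \<omega> {..<n}) q = emp n \<omega> q" for n \<omega> q
      unfolding emp_def by (auto intro!: sum.cong)
    have g_ext: "g n (ext n x) = (SUP q\<in>F. ereal \<bar>emp n x q - integral\<^sup>L M q\<bar>)" for n x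
      unfolding g_def emp_ext ..
    have extm: "ext n \<in> measurable (Q n) Pinf" for n
      unfolding Q_def Pinf_def
    proof -
      have "(\<lambda>x i. (\<lambda>x. if i < n then x i else c) x) \<in> measurable (PiM {..<n} (\<lambda>_. M)) (PiM UNIV (\<lambda>_. M))"
      proof (rule measurable_PiM_single')
        fix i :: nat
        show "(\<lambda>x. if i < n then x i else c) \<in> measurable (PiM {..<n} (\<lambda>_. M)) M"
        proof (cases "i < n")
          case True then show ?thesis by (simp add: measurable_component_singleton)
        next
          case False then show ?thesis using c by simp
        qed
      next
        show "(\<lambda>x i. if i < n then x i else c) \<in> space (PiM {..<n} (\<lambda>_. M)) \<rightarrow> (\<Pi>\<^sub>E i\<in>UNIV. space M)"
          using c by (auto simp: space_PiM PiE_iff)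
      qed
      then show "ext n \<in> measurable (PiM {..<n} (\<lambda>_. M)) (PiM UNIV (\<lambda>_. M))"
        unfolding ext_def[abs_def] by simp
    qed
    define C where "C n = {x \<in> space (Q n). ereal \<eta> \<le> g n (ext n x)}" for n
    have Cm: "C n \<in> sets (Q n)" for n
    proof -
      have m: "(\<lambda>x. g n (ext n x)) \<in> borel_measurable (Q n)"
        using measurable_comp[OF extm gm] by (simp add: comp_def)
      show ?thesis proof -
        have "C n = (\<lambda>x. g n (ext n x)) -` {ereal \<eta>..} \<inter> space (Q n)" by (auto simp: C_def)
        then show ?thesis using measurable_sets[OF m atLeast_borel] by simp
      qed
    qed
    have measC: "measure (Q n) (C n) = measure Pinf {\<omega>\<in>space Pinf. ereal \<eta> \<le> g n \<omega>}" for n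
    proof -
      have e1: "emeasure Pinf (prod_emb UNIV (\<lambda>_. M) {..<n} (C n)) = emeasure (Q n) (C n)"
        using PP.emeasure_PiM_emb'[of "{..<n}" "C n"] Cm[of n] by (simp add: Q_def Pinf_def)
      have gr: "g n (ext n (restrict \<omega> {..<n})) = g n \<omega>" for \<omega>
        by (simp add: g_def emp_ext emp_res)
      have rs: "restrict \<omega> {..<n} \<in> space (Q n)" if "\<omega> \<in> space Pinf" for \<omega>
        using that by (auto simp: Q_def Pinf_def space_PiM)
      have pe: "\<omega> \<in> prod_emb UNIV (\<lambda>_. M) {..<n} (C n) \<longleftrightarrow> \<omega> \<in> space Pinf \<and> restrict \<omega> {..<n} \<in> C n" for \<omega>
        by (auto simp: prod_emb_def Pinf_def space_PiM)
      have "prod_emb UNIV (\<lambda>_. M) {..<n} (C n) = {\<omega>\<in>space Pinf. ereal \<eta> \<le> g n \<omega>}"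
      proof (intro set_eqI)
        fix \<omega>
        show "\<omega> \<in> prod_emb UNIV (\<lambda>_. M) {..<n} (C n) \<longleftrightarrow> \<omega> \<in> {\<omega>\<in>space Pinf. ereal \<eta> \<le> g n \<omega>}"
          proof
          assume "\<omega> \<in> prod_emb UNIV (\<lambda>_. M) {..<n} (C n)"
          then have "\<omega> \<in> space Pinf" "restrict \<omega> {..<n} \<in> C n" using pe by auto
          then show "\<omega> \<in> {\<omega>\<in>space Pinf. ereal \<eta> \<le> g n \<omega>}" using gr[of \<omega>] by (simp add: C_def)
        next
          assume "\<omega> \<in> {\<omega>\<in>space Pinf. ereal \<eta> \<le> g n \<omega>}"
          then have w: "\<omega> \<in> space Pinf" "ereal \<eta> \<le> g n \<omega>" by auto
          then have "restrict \<omega> {..<n} \<in> C n" using rs[OF w(1)] gr[of \<omega>] by (simp add: C_def)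
          then show "\<omega> \<in> prod_emb UNIV (\<lambda>_. M) {..<n} (C n)" using pe w(1) by blast
        qed
      qed
      with e1 show ?thesis by (simp add: measure_def)
    qed
    define E where "E n = {x \<in> space (PiM {..<n} (\<lambda>_. M)).
                  (INF \<theta>\<in>- U. ereal (emp n x (\<lambda>y. h y \<theta>)))
                    \<le> ereal \<eta> + (INF \<phi>\<in>U. ereal (emp n x (\<lambda>y. h y \<phi>)))}" for n
    have sub: "E n \<subseteq> A n \<union> C n" for n
    proof
      fix x assume xE: "x \<in> E n"
      then have xs: "x \<in> space (Q n)" by (simp add: E_def Q_def)
      show "x \<in> A n \<union> C n"
      proof (rule ccontr)
        assume "x \<notin> A n \<union> C n"
        then have xA: "x \<notin> A n" and lt: "g n (ext n x) < ereal \<eta>" using xs by (auto simp: C_def)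
        have "\<forall>\<theta>\<in>U0. \<bar>emp n x (\<lambda>y. h y \<theta>) - I \<theta>\<bar> < \<eta>"
        proof
          fix \<theta> assume "\<theta> \<in> U0"
          then have "ereal \<bar>emp n x (\<lambda>y. h y \<theta>) - I \<theta>\<bar> \<le> g n (ext n x)"
            unfolding g_ext I_def F_def by (intro SUP_upper) auto
          then have "ereal \<bar>emp n x (\<lambda>y. h y \<theta>) - I \<theta>\<bar> < ereal \<eta>"
            using lt by (rule order_le_less_trans)
          then show "\<bar>emp n x (\<lambda>y. h y \<theta>) - I \<theta>\<bar> < \<eta>" by simp
        qed
        from D[OF xs xA this] xE show False by (simp add: E_def)
      qed
    qed
    have op: "outer_prob (Q n) (E n) \<le> measure (Q n) (A n) + measure (Q n) (C n)" for n
    proof -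
      have "outer_prob (Q n) (E n) \<le> measure (Q n) (A n \<union> C n)"
        unfolding outer_prob_def
      proof (rule cInf_lower)
        have "A n \<union> C n \<in> sets (Q n)" using Am Cm by auto
        then show "measure (Q n) (A n \<union> C n) \<in> {measure (Q n) B |B. B \<in> sets (Q n) \<and> E n \<subseteq> B}"
          using sub[of n] by blast
        show "bdd_below {measure (Q n) B |B. B \<in> sets (Q n) \<and> E n \<subseteq> B}"
          by (rule bdd_belowI[of _ 0]) auto
      qed
      also have "\<dots> \<le> measure (Q n) (A n) + measure (Q n) (C n)"
        by (rule measure_Un_le) (use Am Cm in auto)
      finally show ?thesis .
    qed
    have op0: "0 \<le> outer_prob (Q n) (E n)" for n
      unfolding outer_prob_def
    proof (rule cInf_greatest)
      show "{measure (Q n) B |B. B \<in> sets (Q n) \<and> E n \<subseteq> B} \<noteq> {}"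
        by (auto simp: E_def Q_def)
    qed auto
    have lim2: "(\<lambda>n. measure (Q n) (A n) + measure (Q n) (C n)) \<longlonglongrightarrow> 0"
      using tendsto_add_zero[OF Alim conv_in_prob[OF PinfP gm gae eta]] by (simp add: measC)
    have "(\<lambda>n. outer_prob (Q n) (E n)) \<longlonglongrightarrow> 0"
      by (rule tendsto_sandwich[OF _ _ tendsto_const lim2]) (use op op0 in auto)
    then show "\<exists>\<epsilon>>0.
            (\<lambda>n. outer_prob (PiM {..<n} (\<lambda>_. M))
               {x \<in> space (PiM {..<n} (\<lambda>_. M)).
                  (INF \<theta>\<in>- U. ereal (emp n x (\<lambda>y. h y \<theta>)))
                    \<le> ereal \<epsilon> + (INF \<phi>\<in>U. ereal (emp n x (\<lambda>y. h y \<phi>)))}) \<longlonglongrightarrow> 0"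
      using eta by (intro exI[of _ \<eta>]) (simp add: E_def Q_def)
  qed
  show ?thesis proof -
    have part3: "\<forall>\<theta>. \<theta> \<noteq> \<theta>0 \<longrightarrow> eint M (\<lambda>x. h x \<theta>0) < eint M (\<lambda>x. h x \<theta>)"
      using strict unfolding f_def by blast
    show ?thesis by (rule conjI[OF part1 conjI[OF part2 part3]])
  qed
qed

end
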